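(* Let $L,M,N$ be integers with $\min\{L,M,N\}\ge 2$ and let ${\cal R}=[0,L]\times[0,M]\times[0,N]$. Up to a permutation of the four colors, there is exactly one slab-type coloring of ${\cal R}$.
   Context: Unit cubes are sets $[x,x+1]\times[y,y+1]\times[z,z+1]$ with $(x,y,z)\in\mathbb{Z}^3$. A slab is a $2\times2\times1$ parallelepiped (in any of the three orientations) which is a union of four unit cubes. A slab-type coloring of a region ${\cal R}$ (a finite union of unit cubes) is an assignment of one of four colors to each unit cube of ${\cal R}$ such that every slab contained in ${\cal R}$ covers exactly one cube of each color. *)

theory Defs
  imports Main
begin

text \<open>A unit cube [x,x+1]x[y,y+1]x[z,z+1] is identified with its corner (x,y,z).
  Colors are the four numbers 0,1,2,3.\<close>

type_synonym cube = "int \<times> int \<times> int"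

definition box_cubes :: "int \<Rightarrow> int \<Rightarrow> int \<Rightarrow> cube set" where
  "box_cubes L M N = {(x,y,z). 0 \<le> x \<and> x < L \<and> 0 \<le> y \<and> y < M \<and> 0 \<le> z \<and> z < N}"

definition slabs :: "cube set set" where
  "slabs = (\<Union>(a,b,c). {
      {(a+i, b+j, c) | i j. i \<in> {0,1} \<and> j \<in> {0,1}},
      {(a+i, b, c+k) | i k. i \<in> {0,1} \<and> k \<in> {0,1}},
      {(a, b+j, c+k) | j k. j \<in> {0,1} \<and> k \<in> {0,1}}})"

definition colors :: "nat set" where
  "colors = {0..<4}"

definition slab_type_coloring :: "cube set \<Rightarrow> (cube \<Rightarrow> nat) \<Rightarrow> bool" where
  "slab_type_coloring R col \<longleftrightarrow>
     (\<forall>p\<in>R. col p \<in> colors) \<and>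
     (\<forall>S\<in>slabs. S \<subseteq> R \<longrightarrow> bij_betw col S colors)"

end

theory Submission imports Defs begin
lemma eq_xy: "{(a+i, b+j, d) | i j. i \<in> {0::int,1} \<and> j \<in> {0::int,1}} = {(a,b,d),(a+1,b,d),(a,b+1,d),(a+1,b+1,d)}"
    apply (rule set_eqI) apply (rule iffI)
    apply (elim CollectE exE conjE insertE; simp)
    subgoal for p apply (elim insertE)
     apply (rule CollectI, rule exI[of _ 0], rule exI[of _ 0], simp)
     apply (rule CollectI, rule exI[of _ 1], rule exI[of _ 0], simp)
     apply (rule CollectI, rule exI[of _ 0], rule exI[of _ 1], simp)
     apply (rule CollectI, rule exI[of _ 1], rule exI[of _ 1], simp)
      by simp
    done
lemma eq_xz: "{(a+i, b, d+k) | i k. i \<in> {0::int,1} \<and> k \<in> {0::int,1}} = {(a,b,d),(a+1,b,d),(a,b,d+1),(a+1,b,d+1)}"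
    apply (rule set_eqI) apply (rule iffI)
    apply (elim CollectE exE conjE insertE; simp)
    subgoal for p apply (elim insertE)
     apply (rule CollectI, rule exI[of _ 0], rule exI[of _ 0], simp)
     apply (rule CollectI, rule exI[of _ 1], rule exI[of _ 0], simp)
     apply (rule CollectI, rule exI[of _ 0], rule exI[of _ 1], simp)
     apply (rule CollectI, rule exI[of _ 1], rule exI[of _ 1], simp)
      by simp
    done
lemma eq_yz: "{(a, b+j, d+k) | j k. j \<in> {0::int,1} \<and> k \<in> {0::int,1}} = {(a,b,d),(a,b+1,d),(a,b,d+1),(a,b+1,d+1)}"
    apply (rule set_eqI) apply (rule iffI)
    apply (elim CollectE exE conjE insertE; simp)
    subgoal for p apply (elim insertE)
     apply (rule CollectI, rule exI[of _ 0], rule exI[of _ 0], simp)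
     apply (rule CollectI, rule exI[of _ 1], rule exI[of _ 0], simp)
     apply (rule CollectI, rule exI[of _ 0], rule exI[of _ 1], simp)
     apply (rule CollectI, rule exI[of _ 1], rule exI[of _ 1], simp)
      by simp
    done

lemma slabs_alt: "slabs = (\<Union>(a,b,d). {{(a,b,d),(a+1,b,d),(a,b+1,d),(a+1,b+1,d)},
   {(a,b,d),(a+1,b,d),(a,b,d+1),(a+1,b,d+1)}, {(a,b,d),(a,b+1,d),(a,b,d+1),(a,b+1,d+1)}})"
  unfolding slabs_def eq_xy eq_xz eq_yz ..

lemma slab_xy: "{(a,b,d),(a+1,b,d),(a,b+1,d),(a+1,b+1,d)} \<in> slabs"
  unfolding slabs_alt by blast
lemma slab_xz: "{(a,b,d),(a+1,b,d),(a,b,d+1),(a+1,b,d+1)} \<in> slabs"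
  unfolding slabs_alt by blast
lemma slab_yz: "{(a,b,d),(a,b+1,d),(a,b,d+1),(a,b+1,d+1)} \<in> slabs"
  unfolding slabs_alt by blast

lemma slab_cases:
  assumes "S \<in> slabs"
  shows "\<exists>a b d. S = {(a,b,d),(a+1,b,d),(a,b+1,d),(a+1,b+1,d)} \<or>
     S = {(a,b,d),(a+1,b,d),(a,b,d+1),(a+1,b,d+1)} \<or> S = {(a,b,d),(a,b+1,d),(a,b,d+1),(a,b+1,d+1)}"
  using assms unfolding slabs_alt by blast

lemma face_distinct:
  assumes "bij_betw c {p1,p2,p3,p4} colors" "distinct [p1,p2,p3,p4]"
  shows "distinct [c p1, c p2, c p3, c p4] \<and> c p1 < 4 \<and> c p2 < 4 \<and> c p3 < 4 \<and> c p4 < 4"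
proof -
  have i: "inj_on c {p1,p2,p3,p4}" using assms(1) bij_betw_imp_inj_on by blast
  have "c ` {p1,p2,p3,p4} = colors" using assms(1) bij_betw_imp_surj_on by blast
  then have "c p1 < 4 \<and> c p2 < 4 \<and> c p3 < 4 \<and> c p4 < 4" unfolding colors_def by auto
  moreover have "distinct [c p1, c p2, c p3, c p4]" using i assms(2) unfolding inj_on_def by auto
  ultimately show ?thesis by blast
qed

lemma pig: "(a::nat) < 4 \<Longrightarrow> b < 4 \<Longrightarrow> c < 4 \<Longrightarrow> d < 4 \<Longrightarrow> e < 4 \<Longrightarrow> distinct [a,b,c,d] \<Longrightarrow>
  e \<noteq> b \<Longrightarrow> e \<noteq> c \<Longrightarrow> e \<noteq> d \<Longrightarrow> e = a"
proof -
  assume h: "a < 4" "b < 4" "c < 4" "d < 4" "e < 4" "distinct [a,b,c,d]" "e \<noteq> b" "e \<noteq> c" "e \<noteq> d"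
  have s: "{a,b,c,d} \<subseteq> {0..<4}" using h by auto
  have "card {a,b,c,d} = 4" using h(6) by simp
  then have "{a,b,c,d} = {0..<4}" using s by (simp add: card_subset_eq)
  then have "e \<in> {a,b,c,d}" using h(5) by auto
  then show ?thesis using h by auto
qed

definition mycol :: "cube \<Rightarrow> nat" where
  "mycol p = (case p of (x,y,z) \<Rightarrow> nat ((x+z) mod 2) + 2 * nat ((y+z) mod 2))"


lemma bij4:
  assumes "distinct [c p1, c p2, c p3, c p4]" "c p1 < 4" "c p2 < 4" "c p3 < 4" "c p4 < 4"
  shows "bij_betw c {p1,p2,p3,p4} colors"
proof -
  have s: "c ` {p1,p2,p3,p4} \<subseteq> {0..<4}" using assms by auto
  have "card (c ` {p1,p2,p3,p4}) = 4" using assms(1) by simp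
  then have im: "c ` {p1,p2,p3,p4} = colors" using s unfolding colors_def by (simp add: card_subset_eq)
  have "inj_on c {p1,p2,p3,p4}" unfolding inj_on_def using assms(1) by auto
  then show ?thesis using im unfolding bij_betw_def by blast
qed


lemma mycol_simp: "mycol (x,y,z) = nat ((x+z) mod 2) + 2 * nat ((y+z) mod 2)"
  by (simp add: mycol_def)

lemma par_cases: obtains "(x::int) mod 2 = 0" "(x+1) mod 2 = 1" | "x mod 2 = 1" "(x+1) mod 2 = 0"
proof (cases "x mod 2 = 0")
  case True
  then have "(x+1) mod 2 = 1" by presburger
  then show ?thesis using True by (intro that(1))
next
  case False
  then have "x mod 2 = 1" "(x+1) mod 2 = 0" by presburger+
  then show ?thesis by (intro that(2))
qed

lemma mycol_xy: "bij_betw mycol {(a,b,d),(a+1,b,d),(a,b+1,d),(a+1,b+1,d)} colors"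
proof -
  have e: "a + 1 + d = (a+d)+1" "b + 1 + d = (b+d)+1" by simp_all
  show ?thesis
  apply (rule bij4) unfolding mycol_simp e
  by (rule par_cases[of "a+d"]; rule par_cases[of "b+d"]; simp)+
qed
lemma mycol_xz: "bij_betw mycol {(a,b,d),(a+1,b,d),(a,b,d+1),(a+1,b,d+1)} colors"
proof -
  have e: "a + 1 + d = (a+d)+1" "b + (d+1) = (b+d)+1" "a + (d+1) = (a+d)+1" "a + 1 + (d+1) = (a+d)+1+1" by simp_all
  have f: "(x::int)+1+1 = x + 2" for x by simp
  show ?thesis
  apply (rule bij4) unfolding mycol_simp e f
  by (rule par_cases[of "a+d"]; rule par_cases[of "b+d"]; simp)+
qed
lemma mycol_yz: "bij_betw mycol {(a,b,d),(a,b+1,d),(a,b,d+1),(a,b+1,d+1)} colors"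
proof -
  have e: "b + 1 + d = (b+d)+1" "b + (d+1) = (b+d)+1" "a + (d+1) = (a+d)+1" "b + 1 + (d+1) = (b+d)+1+1" by simp_all
  have f: "(x::int)+1+1 = x + 2" for x by simp
  show ?thesis
  apply (rule bij4) unfolding mycol_simp e f
  by (rule par_cases[of "a+d"]; rule par_cases[of "b+d"]; simp)+
qed


lemma box_mem: "((x,y,z) \<in> box_cubes L M N) = (0 \<le> x \<and> x < L \<and> 0 \<le> y \<and> y < M \<and> 0 \<le> z \<and> z < N)"
  by (simp add: box_cubes_def)

lemma stc_face:
  assumes "slab_type_coloring R c" "S \<in> slabs" "S \<subseteq> R"
  shows "bij_betw c S colors"
  using assms unfolding slab_type_coloring_def by blast

lemma block:
  assumes col: "slab_type_coloring (box_cubes L M N) c"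
    and h: "0 \<le> a" "a+1 < L" "0 \<le> b" "b+1 < M" "0 \<le> d" "d+1 < N"
  shows "c (a,b,d) = c (a+1,b+1,d+1) \<and> c (a+1,b,d) = c (a,b+1,d+1) \<and>
         c (a,b+1,d) = c (a+1,b,d+1) \<and> c (a+1,b+1,d) = c (a,b,d+1)"
proof -
  have f1: "distinct [c (a,b,d), c (a+1,b,d), c (a,b+1,d), c (a+1,b+1,d)] \<and>
     c (a,b,d) < 4 \<and> c (a+1,b,d) < 4 \<and> c (a,b+1,d) < 4 \<and> c (a+1,b+1,d) < 4"
    by (rule face_distinct, rule stc_face[OF col slab_xy], use h in \<open>auto simp: box_mem\<close>)
  have f2: "distinct [c (a,b,d+1), c (a+1,b,d+1), c (a,b+1,d+1), c (a+1,b+1,d+1)] \<and> c (a+1,b+1,d+1) < 4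
     \<and> c (a,b,d+1) < 4 \<and> c (a+1,b,d+1) < 4 \<and> c (a,b+1,d+1) < 4"
    using face_distinct[OF stc_face[OF col slab_xy[of a b "d+1"]]] h by (auto simp: box_mem)
  have f3: "distinct [c (a,b,d), c (a+1,b,d), c (a,b,d+1), c (a+1,b,d+1)]"
    using face_distinct[OF stc_face[OF col slab_xz[of a b d]]] h by (auto simp: box_mem)
  have f4: "distinct [c (a,b+1,d), c (a+1,b+1,d), c (a,b+1,d+1), c (a+1,b+1,d+1)]"
    using face_distinct[OF stc_face[OF col slab_xz[of a "b+1" d]]] h by (auto simp: box_mem)
  have f5: "distinct [c (a,b,d), c (a,b+1,d), c (a,b,d+1), c (a,b+1,d+1)]"
    using face_distinct[OF stc_face[OF col slab_yz[of a b d]]] h by (auto simp: box_mem)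
  have f6: "distinct [c (a+1,b,d), c (a+1,b+1,d), c (a+1,b,d+1), c (a+1,b+1,d+1)]"
    using face_distinct[OF stc_face[OF col slab_yz[of "a+1" b d]]] h by (auto simp: box_mem)
  have e1: "c (a+1,b+1,d+1) = c (a,b,d)"
    by (rule pig[of "c (a,b,d)" "c (a+1,b,d)" "c (a,b+1,d)" "c (a+1,b+1,d)"]) (use f1 f2 f3 f4 f5 f6 in auto)
  have e2: "c (a,b+1,d+1) = c (a+1,b,d)"
    by (rule pig[of "c (a+1,b,d)" "c (a,b,d)" "c (a,b+1,d)" "c (a+1,b+1,d)"]) (use f1 f2 f3 f4 f5 f6 in auto)
  have e3: "c (a+1,b,d+1) = c (a,b+1,d)"
    by (rule pig[of "c (a,b+1,d)" "c (a,b,d)" "c (a+1,b,d)" "c (a+1,b+1,d)"]) (use f1 f2 f3 f4 f5 f6 in auto)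
  have e4: "c (a,b,d+1) = c (a+1,b+1,d)"
    by (rule pig[of "c (a+1,b+1,d)" "c (a,b,d)" "c (a+1,b,d)" "c (a,b+1,d)"]) (use f1 f2 f3 f4 f5 f6 in auto)
  show ?thesis using e1 e2 e3 e4 by simp
qed

lemma block2:
  assumes col: "slab_type_coloring (box_cubes L M N) c"
    and h: "0 \<le> a" "a+1 < L" "0 \<le> b" "b+1 < M" "0 \<le> d" "d+1 < N"
    and ijk: "i \<in> {0,1}" "j \<in> {0,1}" "k \<in> {0,1}"
  shows "c (a+i,b+j,d+k) = c (a+1-i,b+1-j,d+1-k)"
  using block[OF col h] ijk by auto

lemma antipode:
  assumes col: "slab_type_coloring (box_cubes L M N) c"
    and p: "(x,y,z) \<in> box_cubes L M N" and q: "(x',y',z') \<in> box_cubes L M N"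
    and d: "\<bar>x - x'\<bar> = 1" "\<bar>y - y'\<bar> = 1" "\<bar>z - z'\<bar> = 1"
  shows "c (x,y,z) = c (x',y',z')"
proof -
  define a where "a = min x x'"
  define b where "b = min y y'"
  define e where "e = min z z'"
  have h: "0 \<le> a" "a+1 < L" "0 \<le> b" "b+1 < M" "0 \<le> e" "e+1 < N"
    using p q d unfolding a_def b_def e_def box_mem by auto
  have ijk: "x - a \<in> {0,1}" "y - b \<in> {0,1}" "z - e \<in> {0,1}"
    using d unfolding a_def b_def e_def by auto
  have "c (a+(x-a),b+(y-b),e+(z-e)) = c (a+1-(x-a),b+1-(y-b),e+1-(z-e))"
    by (rule block2[OF col h ijk])
  moreover have "a+1-(x-a) = x'" "b+1-(y-b) = y'" "e+1-(z-e) = z'"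
    using d unfolding a_def b_def e_def by auto
  ultimately show ?thesis by simp
qed

definition oth :: "int \<Rightarrow> int \<Rightarrow> int" where
  "oth M y = (if y + 1 < M then y + 1 else y - 1)"

lemma oth: "2 \<le> M \<Longrightarrow> 0 \<le> y \<Longrightarrow> y < M \<Longrightarrow> 0 \<le> oth M y \<and> oth M y < M \<and> \<bar>y - oth M y\<bar> = 1"
  unfolding oth_def by auto

lemma shift_x:
  assumes col: "slab_type_coloring (box_cubes L M N) c" and m: "2 \<le> M" "2 \<le> N"
    and p: "(x,y,z) \<in> box_cubes L M N" and x2: "2 \<le> x"
  shows "c (x,y,z) = c (x-2,y,z)"
proof -
  have o: "0 \<le> oth M y \<and> oth M y < M \<and> \<bar>y - oth M y\<bar> = 1" "0 \<le> oth N z \<and> oth N z < N \<and> \<bar>z - oth N z\<bar> = 1"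
    using oth m p by (auto simp: box_mem)
  have r: "(x-1, oth M y, oth N z) \<in> box_cubes L M N" using o p x2 by (auto simp: box_mem)
  have "c (x,y,z) = c (x-1, oth M y, oth N z)"
    by (rule antipode[OF col p r]) (use o in auto)
  also have "\<dots> = c (x-2,y,z)"
    by (rule antipode[OF col r]) (use o p x2 in \<open>auto simp: box_mem\<close>)
  finally show ?thesis .
qed

lemma shift_y:
  assumes col: "slab_type_coloring (box_cubes L M N) c" and m: "2 \<le> L" "2 \<le> N"
    and p: "(x,y,z) \<in> box_cubes L M N" and x2: "2 \<le> y"
  shows "c (x,y,z) = c (x,y-2,z)"
proof -
  have o: "0 \<le> oth L x \<and> oth L x < L \<and> \<bar>x - oth L x\<bar> = 1" "0 \<le> oth N z \<and> oth N z < N \<and> \<bar>z - oth N z\<bar> = 1"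
    using oth m p by (auto simp: box_mem)
  have r: "(oth L x, y-1, oth N z) \<in> box_cubes L M N" using o p x2 by (auto simp: box_mem)
  have "c (x,y,z) = c (oth L x, y-1, oth N z)"
    by (rule antipode[OF col p r]) (use o in auto)
  also have "\<dots> = c (x,y-2,z)"
    by (rule antipode[OF col r]) (use o p x2 in \<open>auto simp: box_mem\<close>)
  finally show ?thesis .
qed

lemma shift_z:
  assumes col: "slab_type_coloring (box_cubes L M N) c" and m: "2 \<le> L" "2 \<le> M"
    and p: "(x,y,z) \<in> box_cubes L M N" and x2: "2 \<le> z"
  shows "c (x,y,z) = c (x,y,z-2)"
proof -
  have o: "0 \<le> oth L x \<and> oth L x < L \<and> \<bar>x - oth L x\<bar> = 1" "0 \<le> oth M y \<and> oth M y < M \<and> \<bar>y - oth M y\<bar> = 1"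
    using oth m p by (auto simp: box_mem)
  have r: "(oth L x, oth M y, z-1) \<in> box_cubes L M N" using o p x2 by (auto simp: box_mem)
  have "c (x,y,z) = c (oth L x, oth M y, z-1)"
    by (rule antipode[OF col p r]) (use o in auto)
  also have "\<dots> = c (x,y,z-2)"
    by (rule antipode[OF col r]) (use o p x2 in \<open>auto simp: box_mem\<close>)
  finally show ?thesis .
qed

lemma red_x:
  assumes col: "slab_type_coloring (box_cubes L M N) c" and m: "2 \<le> M" "2 \<le> N"
  shows "(x,y,z) \<in> box_cubes L M N \<Longrightarrow> c (x,y,z) = c (x mod 2,y,z)"
proof (induction "nat x" arbitrary: x rule: less_induct)
  case less
  show ?case
  proof (cases "x < 2")
    case True
    then have "x mod 2 = x" using less.prems by (simp add: box_mem)
    then show ?thesis by simp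
  next
    case False
    have p2: "(x-2,y,z) \<in> box_cubes L M N" using less.prems False by (auto simp: box_mem)
    have "c (x,y,z) = c (x-2,y,z)" using shift_x[OF col m less.prems] False by simp
    also have "\<dots> = c ((x-2) mod 2,y,z)" using less.hyps[OF _ p2] False by simp
    also have "(x-2) mod 2 = x mod 2" by presburger
    finally show ?thesis .
  qed
qed

lemma red_y:
  assumes col: "slab_type_coloring (box_cubes L M N) c" and m: "2 \<le> L" "2 \<le> N"
  shows "(x,y,z) \<in> box_cubes L M N \<Longrightarrow> c (x,y,z) = c (x,y mod 2,z)"
proof (induction "nat y" arbitrary: y rule: less_induct)
  case less
  show ?case
  proof (cases "y < 2")
    case True
    then have "y mod 2 = y" using less.prems by (simp add: box_mem)
    then show ?thesis by simp
  next
    case False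
    have p2: "(x,y-2,z) \<in> box_cubes L M N" using less.prems False by (auto simp: box_mem)
    have "c (x,y,z) = c (x,y-2,z)" using shift_y[OF col m less.prems] False by simp
    also have "\<dots> = c (x,(y-2) mod 2,z)" using less.hyps[OF _ p2] False by simp
    also have "(y-2) mod 2 = y mod 2" by presburger
    finally show ?thesis .
  qed
qed

lemma red_z:
  assumes col: "slab_type_coloring (box_cubes L M N) c" and m: "2 \<le> L" "2 \<le> M"
  shows "(x,y,z) \<in> box_cubes L M N \<Longrightarrow> c (x,y,z) = c (x,y,z mod 2)"
proof (induction "nat z" arbitrary: z rule: less_induct)
  case less
  show ?case
  proof (cases "z < 2")
    case True
    then have "z mod 2 = z" using less.prems by (simp add: box_mem)
    then show ?thesis by simp
  next
    case False
    have p2: "(x,y,z-2) \<in> box_cubes L M N" using less.prems False by (auto simp: box_mem)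
    have "c (x,y,z) = c (x,y,z-2)" using shift_z[OF col m less.prems] False by simp
    also have "\<dots> = c (x,y,(z-2) mod 2)" using less.hyps[OF _ p2] False by simp
    also have "(z-2) mod 2 = z mod 2" by presburger
    finally show ?thesis .
  qed
qed

lemma to_rep:
  assumes col: "slab_type_coloring (box_cubes L M N) c" and m: "2 \<le> L" "2 \<le> M" "2 \<le> N"
    and p: "(x,y,z) \<in> box_cubes L M N"
  shows "c (x,y,z) = c ((x+z) mod 2, (y+z) mod 2, 0)"
proof -
  have p1: "(x mod 2, y, z) \<in> box_cubes L M N" using p m by (auto simp: box_mem)
  have p2: "(x mod 2, y mod 2, z) \<in> box_cubes L M N" using p m by (auto simp: box_mem)
  have p3: "(x mod 2, y mod 2, z mod 2) \<in> box_cubes L M N" using p m by (auto simp: box_mem)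
  have "c (x,y,z) = c (x mod 2, y mod 2, z mod 2)"
    using red_x[OF col m(2,3) p] red_y[OF col m(1,3) p1] red_z[OF col m(1,2) p2] by simp
  also have "\<dots> = c ((x+z) mod 2, (y+z) mod 2, 0)"
  proof (cases "z mod 2 = 0")
    case True
    then have "(x+z) mod 2 = x mod 2" "(y+z) mod 2 = y mod 2" by presburger+
    then show ?thesis using True by simp
  next
    case False
    then have z1: "z mod 2 = 1" by presburger
    have q: "((x+z) mod 2, (y+z) mod 2, 0) \<in> box_cubes L M N" using m by (auto simp: box_mem)
    show ?thesis
      by (rule antipode[OF col p3 q]) (use z1 in presburger)+
  qed
  finally show ?thesis .
qed

theorem lemma3p2:
  fixes L M N :: int
  assumes "min L (min M N) \<ge> 2"
  shows "(\<exists>col. slab_type_coloring (box_cubes L M N) col) \<and>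
         (\<forall>c1 c2. slab_type_coloring (box_cubes L M N) c1 \<longrightarrow>
                  slab_type_coloring (box_cubes L M N) c2 \<longrightarrow>
                  (\<exists>\<sigma>. bij_betw \<sigma> colors colors \<and>
                       (\<forall>p\<in>box_cubes L M N. c2 p = \<sigma> (c1 p))))"
proof (intro conjI allI impI)
  have m: "2 \<le> L" "2 \<le> M" "2 \<le> N" using assms by auto
  show "\<exists>col. slab_type_coloring (box_cubes L M N) col"
  proof (intro exI[of _ mycol])
    have "bij_betw mycol S colors" if "S \<in> slabs" for S
    proof -
      from slab_cases[OF that] obtain a b d where S: "S = {(a,b,d),(a+1,b,d),(a,b+1,d),(a+1,b+1,d)} \<or>
        S = {(a,b,d),(a+1,b,d),(a,b,d+1),(a+1,b,d+1)} \<or> S = {(a,b,d),(a,b+1,d),(a,b,d+1),(a,b+1,d+1)}"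
        by blast
      then show ?thesis using mycol_xy mycol_xz mycol_yz by blast
    qed
    moreover have "mycol p \<in> colors" for p
      unfolding colors_def mycol_def by (cases p) auto
    ultimately show "slab_type_coloring (box_cubes L M N) mycol"
      unfolding slab_type_coloring_def by blast
  qed
  fix c1 c2
  assume c1: "slab_type_coloring (box_cubes L M N) c1" and c2: "slab_type_coloring (box_cubes L M N) c2"
  define F where "F = {(0::int,0::int,0::int),(0+1,0,0),(0,0+1,0),(0+1,0+1,0)}"
  have Fs: "F \<in> slabs" unfolding F_def by (rule slab_xy)
  have Fb: "F \<subseteq> box_cubes L M N" unfolding F_def using m by (auto simp: box_mem)
  have b1: "bij_betw c1 F colors" by (rule stc_face[OF c1 Fs Fb])
  have b2: "bij_betw c2 F colors" by (rule stc_face[OF c2 Fs Fb])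
  define \<sigma> where "\<sigma> = c2 \<circ> inv_into F c1"
  have "bij_betw \<sigma> colors colors"
    unfolding \<sigma>_def by (rule bij_betw_trans[OF bij_betw_inv_into[OF b1] b2])
  moreover have "c2 p = \<sigma> (c1 p)" if p: "p \<in> box_cubes L M N" for p
  proof -
    obtain x y z where pe: "p = (x,y,z)" by (cases p)
    define r where "r = ((x+z) mod 2, (y+z) mod 2, 0::int)"
    have rF: "r \<in> F" unfolding r_def F_def
      using par_cases[of "x+z"] par_cases[of "y+z"] by (metis insert_iff add_0)
    have e1: "c1 p = c1 r" unfolding pe r_def by (rule to_rep[OF c1 m p[unfolded pe]])
    have e2: "c2 p = c2 r" unfolding pe r_def by (rule to_rep[OF c2 m p[unfolded pe]])
    have "inv_into F c1 (c1 r) = r"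
      by (rule inv_into_f_f[OF bij_betw_imp_inj_on[OF b1] rF])
    then show ?thesis unfolding \<sigma>_def e1 e2 by simp
  qed
  ultimately show "\<exists>\<sigma>. bij_betw \<sigma> colors colors \<and> (\<forall>p\<in>box_cubes L M N. c2 p = \<sigma> (c1 p))"
    by blast
qed

end
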